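(* Let $n\ge2$ and $0<c\le\frac1{\sqrt n}$. Set $\delta=\frac1n+\frac{\sqrt{(n-1)(c^2-c^4)}}{n(c^2-1)}$. Then $0\le\delta<\frac1n$, and with $B=I-\delta e^{n\times n}$ having columns $b_1,\dots,b_n$ and $\alpha=\frac1{\sqrt{\delta^2n-2\delta+1}}$, the set $\{\alpha b_1,\dots,\alpha b_n,-\alpha b_1,\dots,-\alpha b_n\}$ is a positive basis of $\mathbb R^n$ with cosine measure $c$.
   Context: $e^{n\times n}$ is the $n\times n$ all-ones matrix. A finite set $\mathcal P$ is a positive basis if its positive span $\{\sum\lambda_id_i:\lambda_i\ge0\}$ is $\mathbb R^n$ and no $d\in\mathcal P$ lies in the positive span of $\mathcal P\setminus\{d\}$. The cosine measure of a finite $\mathcal S\subset\mathbb R^n\setminus\{\mathbf 0\}$ is $\min_{\|u\|=1}\max_{d\in\mathcal S}\frac{d^\top u}{\|d\|}$. *)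

theory Defs
  imports "HOL-Analysis.Analysis"
begin

definition pos_span :: "('a::real_vector) set \<Rightarrow> 'a set" where
  "pos_span S = {x. \<exists>w. (\<forall>d\<in>S. 0 \<le> w d) \<and> x = (\<Sum>d\<in>S. w d *\<^sub>R d)}"

definition positive_basis :: "('a::real_vector) set \<Rightarrow> bool" where
  "positive_basis P \<longleftrightarrow> finite P \<and> pos_span P = UNIV \<and>
     (\<forall>d\<in>P. d \<notin> pos_span (P - {d}))"

definition cosine_measure :: "('a::real_inner) set \<Rightarrow> real" where
  "cosine_measure S = (INF u\<in>{u. norm u = 1}. Max ((\<lambda>d. inner d u / norm d) ` S))"

definition ones_mat :: "real^'n^'n" where
  "ones_mat = (\<chi> i j. 1)"

definition col :: "'n \<Rightarrow> 'a^'n^'m \<Rightarrow> 'a^'m" where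
  "col j A = (\<chi> i. A $ i $ j)"

end

theory Submission
  imports Defs
begin

lemma sum_if_scale:
  fixes f :: "'n::finite \<Rightarrow> 'a::real_vector"
  shows "(\<Sum>j\<in>UNIV. (if j = a then t else 0) *\<^sub>R f j) = t *\<^sub>R f a"
proof -
  have "(\<Sum>j\<in>UNIV. (if j = a then t else 0) *\<^sub>R f j) = (\<Sum>j\<in>UNIV. (if j = a then t *\<^sub>R f j else 0))"
    by (rule sum.cong) auto
  also have "\<dots> = t *\<^sub>R f a" by (simp add: sum.delta)
  finally show ?thesis .
qed

lemma pb_lemma:
  fixes f :: "'n::finite \<Rightarrow> 'a::real_vector"
  assumes span: "\<And>x. \<exists>l. x = (\<Sum>j\<in>UNIV. l j *\<^sub>R f j)"
    and indep: "\<And>l. (\<Sum>j\<in>UNIV. l j *\<^sub>R f j) = 0 \<Longrightarrow> l = (\<lambda>_. 0)"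
  shows "positive_basis (range f \<union> range (\<lambda>j. - f j))"
proof -
  let ?P = "range f \<union> range (\<lambda>j. - f j)"
  have two: "(\<Sum>j\<in>UNIV. ((if j = a then s else 0) + (if j = b then t else 0)) *\<^sub>R f j)
      = s *\<^sub>R f a + t *\<^sub>R f b" for a b s t
    by (simp add: scaleR_add_left sum.distrib sum_if_scale)
  have injf: "inj f"
  proof (rule injI)
    fix a b assume h: "f a = f b"
    show "a = b"
    proof (rule ccontr)
      assume ne: "a \<noteq> b"
      let ?l = "\<lambda>j. (if j = a then 1 else 0) + (if j = b then -1 else 0) :: real"
      have "(\<Sum>j\<in>UNIV. ?l j *\<^sub>R f j) = 0" using two[of a 1 b "-1"] h by simp
      from fun_cong[OF indep[OF this], of a] have "?l a = 0" by simp
      with ne show False by simp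
    qed
  qed
  have injm: "inj (\<lambda>j. - f j)" using injf by (simp add: inj_def)
  have disj: "f a \<noteq> - f b" for a b
  proof
    assume h: "f a = - f b"
    let ?l = "\<lambda>j. (if j = a then 1 else 0) + (if j = b then 1 else 0) :: real"
    have "(\<Sum>j\<in>UNIV. ?l j *\<^sub>R f j) = 0" using two[of a 1 b 1] h by simp
    from fun_cong[OF indep[OF this], of a] have "?l a = 0" by simp
    then show False by (simp split: if_splits)
  qed
  have dis: "range f \<inter> range (\<lambda>j. - f j) = {}" using disj by auto
  have sumP: "(\<Sum>e\<in>?P. g e) = (\<Sum>j\<in>UNIV. g (f j)) + (\<Sum>j\<in>UNIV. g (- f j))" for g :: "'a \<Rightarrow> 'a"
  proof -
    have "(\<Sum>e\<in>?P. g e) = (\<Sum>e\<in>range f. g e) + (\<Sum>e\<in>range (\<lambda>j. - f j). g e)"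
      by (rule sum.union_disjoint) (use dis in auto)
    also have "(\<Sum>e\<in>range f. g e) = (\<Sum>j\<in>UNIV. g (f j))"
      using sum.reindex[OF injf, of g] by simp
    also have "(\<Sum>e\<in>range (\<lambda>j. - f j). g e) = (\<Sum>j\<in>UNIV. g (- f j))"
      using sum.reindex[OF injm, of g] by simp
    finally show ?thesis .
  qed
  have sumW: "(\<Sum>e\<in>?P. w e *\<^sub>R e) = (\<Sum>j\<in>UNIV. (w (f j) - w (- f j)) *\<^sub>R f j)" for w
    by (simp add: sumP scaleR_diff_left sum_subtractf sum_negf)
  have fin: "finite ?P" by simp
  have spanP: "pos_span ?P = UNIV"
  proof (rule set_eqI, rule iffI)
    fix x :: 'a
    obtain l where l: "x = (\<Sum>j\<in>UNIV. l j *\<^sub>R f j)" using span by blast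
    define w where "w e = (if e \<in> range f then max (l (inv f e)) 0 else max (- l (inv f (- e))) 0)" for e
    have w1: "w (f j) = max (l j) 0" for j using injf by (simp add: w_def)
    have w2: "w (- f j) = max (- l j) 0" for j
    proof -
      have "- f j \<notin> range f" using disj by (metis imageE minus_minus)
      then show ?thesis using injf by (simp add: w_def)
    qed
    have "x = (\<Sum>e\<in>?P. w e *\<^sub>R e)"
      unfolding sumW w1 w2 l by (rule sum.cong) (auto simp: max_def)
    moreover have "\<forall>d\<in>?P. 0 \<le> w d" by (auto simp: w_def)
    ultimately show "x \<in> pos_span ?P" unfolding pos_span_def by blast
  qed simp
  have indP: "d \<notin> pos_span (?P - {d})" if dP: "d \<in> ?P" for d
  proof
    assume "d \<in> pos_span (?P - {d})"
    then obtain w where wnn: "\<forall>e\<in>?P - {d}. 0 \<le> w e" and dw: "d = (\<Sum>e\<in>?P - {d}. w e *\<^sub>R e)"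
      unfolding pos_span_def by blast
    define w' where "w' e = (if e = d then 0 else w e)" for e
    have "(\<Sum>e\<in>?P. w' e *\<^sub>R e) = w' d *\<^sub>R d + (\<Sum>e\<in>?P - {d}. w' e *\<^sub>R e)"
      using dP by (simp add: sum.remove)
    also have "\<dots> = (\<Sum>e\<in>?P - {d}. w e *\<^sub>R e)" by (simp add: w'_def)
    finally have dw': "d = (\<Sum>j\<in>UNIV. (w' (f j) - w' (- f j)) *\<^sub>R f j)" using dw sumW by simp
    from dP consider a where "d = f a" | a where "d = - f a" by blast
    then show False
    proof cases
      case 1
      let ?l = "\<lambda>j. (w' (f j) - w' (- f j)) + (if j = a then -1 else 0)"
      have "(\<Sum>j\<in>UNIV. ?l j *\<^sub>R f j) = 0"
        using dw' 1 by (simp add: scaleR_add_left sum.distrib sum_if_scale)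
      from fun_cong[OF indep[OF this], of a] have "?l a = 0" by simp
      moreover have "w' (f a) = 0" using 1 by (simp add: w'_def)
      moreover have "w' (- f a) \<ge> 0" using 1 disj[of a a] wnn by (auto simp: w'_def)
      ultimately show False by simp
    next
      case 2
      let ?l = "\<lambda>j. (w' (f j) - w' (- f j)) + (if j = a then 1 else 0)"
      have "(\<Sum>j\<in>UNIV. ?l j *\<^sub>R f j) = 0"
        using dw' 2 by (simp add: scaleR_add_left sum.distrib sum_if_scale) (metis add.left_inverse)
      from fun_cong[OF indep[OF this], of a] have "?l a = 0" by simp
      moreover have "w' (- f a) = 0" using 2 by (simp add: w'_def)
      moreover have "w' (f a) \<ge> 0" using 2 disj[of a a] wnn by (auto simp: w'_def)
      ultimately show False by simp
    qed
  qed
  show ?thesis unfolding positive_basis_def using fin spanP indP by blast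
qed

theorem corollary3:
  fixes c :: real
  assumes n2: "CARD('n::finite) \<ge> 2"
    and c_pos: "0 < c" and c_le: "c \<le> 1 / sqrt (real CARD('n))"
  defines "n \<equiv> real CARD('n)"
  defines "\<delta> \<equiv> 1 / n + sqrt ((n - 1) * (c^2 - c^4)) / (n * (c^2 - 1))"
  defines "B \<equiv> (mat 1 :: real^'n^'n) - \<delta> *\<^sub>R ones_mat"
  defines "\<alpha> \<equiv> 1 / sqrt (\<delta>^2 * n - 2 * \<delta> + 1)"
  defines "P \<equiv> (\<lambda>j. \<alpha> *\<^sub>R col j B) ` UNIV \<union> (\<lambda>j. - (\<alpha> *\<^sub>R col j B)) ` UNIV"
  shows "0 \<le> \<delta> \<and> \<delta> < 1 / n \<and> positive_basis P \<and> cosine_measure P = c"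
proof -
  have n2': "n \<ge> 2" using n2 unfolding n_def by simp
  have npos: "n > 0" using n2' by simp
  have c2n: "c^2 \<le> 1 / n"
  proof -
    have "c^2 \<le> (1 / sqrt n)^2" using c_le c_pos unfolding n_def by (intro power_mono) auto
    also have "\<dots> = 1 / n" using npos by (simp add: power_divide)
    finally show ?thesis .
  qed
  have "1 / n \<le> 1 / 2" using n2' by (intro divide_left_mono) auto
  then have c2lt: "c^2 < 1" using c2n by linarith
  have c2pos: "c^2 > 0" using c_pos by simp
  define r where "r = sqrt ((n - 1) * (c^2 - c^4))"
  have argpos: "(n - 1) * (c^2 - c^4) > 0"
  proof -
    have "c^2 - c^4 = c^2 * (1 - c^2)" by (simp add: algebra_simps power2_eq_square power4_eq_xxxx)
    then show ?thesis using c2lt c2pos n2' by simp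
  qed
  have rpos: "r > 0" unfolding r_def using argpos by simp
  have r2: "r^2 = (n - 1) * c^2 * (1 - c^2)"
    unfolding r_def using argpos by (simp add: algebra_simps power2_eq_square power4_eq_xxxx)
  define y where "y = 1 - n * \<delta>"
  have y_eq: "y = r / (1 - c^2)"
    unfolding y_def \<delta>_def r_def[symmetric] using npos c2lt by (simp add: field_simps)
  have ypos: "y > 0" using y_eq rpos c2lt by simp
  have key1: "y^2 * (1 - c^2) = c^2 * (n - 1)"
  proof -
    have "y^2 * (1 - c^2) = r^2 / (1 - c^2)" using y_eq c2lt by (simp add: power_divide power2_eq_square)
    also have "\<dots> = c^2 * (n - 1)" using r2 c2lt by simp
    finally show ?thesis .
  qed
  have dlt: "\<delta> < 1 / n" using ypos npos unfolding y_def by (simp add: field_simps)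
  have y1: "y \<le> 1"
  proof -
    have "c^2 * n \<le> 1" using c2n npos by (simp add: pos_le_divide_eq)
    then have "y^2 * (1 - c^2) \<le> 1 * (1 - c^2)"
      using key1 by (simp add: algebra_simps)
    then have "y^2 \<le> 1" using c2lt by (simp add: mult_le_cancel_right)
    then show ?thesis using ypos by (simp add: power_le_one_iff abs_le_iff)
  qed
  have dge: "0 \<le> \<delta>" using y1 npos unfolding y_def by (simp add: zero_le_mult_iff)
  define D where "D = \<delta>^2 * n - 2 * \<delta> + 1"
  have nD: "n * D = y^2 + n - 1"
    unfolding D_def y_def power2_eq_square by algebra
  have "y^2 + n - 1 > 0" using ypos n2' zero_le_power2[of y] by linarith
  then have "n * D > 0" using nD by linarith
  then have Dpos: "D > 0" using npos by (simp add: zero_less_mult_iff)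
  have apos: "\<alpha> > 0" unfolding \<alpha>_def D_def[symmetric] using Dpos by simp
  have a2: "\<alpha>^2 = 1 / D" unfolding \<alpha>_def D_def[symmetric] using Dpos by (simp add: power_divide)
  have c_eq: "c = \<alpha> * y / sqrt n"
  proof -
    have "(\<alpha> * y / sqrt n)^2 = y^2 / (n * D)" using a2 npos by (simp add: power_divide power_mult_distrib)
    also have "\<dots> = c^2"
    proof -
      have den: "y^2 + n - 1 > 0" using ypos n2' zero_le_power2[of y] by linarith
      have "y^2 = c^2 * (y^2 + n - 1)" using key1 by (simp add: algebra_simps)
      then show ?thesis unfolding nD using den by (simp add: divide_eq_eq)
    qed
    finally have "(\<alpha> * y / sqrt n)^2 = c^2" .
    then show ?thesis using apos ypos npos c_pos
      by (smt (verit) divide_pos_pos mult_pos_pos power2_eq_iff_nonneg real_sqrt_gt_zero)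
  qed
  define f where "f j = \<alpha> *\<^sub>R col j B" for j
  have colB: "col j B $ i = (if i = j then 1 else 0) - \<delta>" for i j
    unfolding B_def col_def by (simp add: mat_def ones_mat_def)
  have P_eq: "P = range f \<union> range (\<lambda>j. - f j)" unfolding P_def f_def by simp
  have comb: "(\<Sum>j\<in>UNIV. l j *\<^sub>R col j B) $ i = l i - \<delta> * (\<Sum>j\<in>UNIV. l j)" for l i
  proof -
    have "(\<Sum>j\<in>UNIV. l j *\<^sub>R col j B) $ i = (\<Sum>j\<in>UNIV. l j * ((if i = j then 1 else 0) - \<delta>))"
      by (simp add: colB)
    also have "\<dots> = (\<Sum>j\<in>UNIV. (if i = j then l j else 0) - \<delta> * l j)"
      by (rule sum.cong) (auto simp: algebra_simps)
    also have "\<dots> = l i - \<delta> * (\<Sum>j\<in>UNIV. l j)"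
      by (simp add: sum_subtractf sum_distrib_left)
    finally show ?thesis .
  qed
  have sumf: "(\<Sum>j\<in>UNIV. l j *\<^sub>R f j) = (\<Sum>j\<in>UNIV. (\<alpha> * l j) *\<^sub>R col j B)" for l
    by (simp add: f_def mult.commute)
  have cardn: "real (card (UNIV :: 'n set)) = n" unfolding n_def by simp
  have span: "\<exists>l. x = (\<Sum>j\<in>UNIV. l j *\<^sub>R f j)" for x :: "real^'n"
  proof -
    define S where "S = (\<Sum>i\<in>UNIV. x $ i)"
    define \<gamma> where "\<gamma> = \<delta> / y"
    have gy: "\<gamma> * y = \<delta>" unfolding \<gamma>_def using ypos by simp
    define l where "l j = (x $ j + \<gamma> * S) / \<alpha>" for j
    have al: "\<alpha> * l j = x $ j + \<gamma> * S" for j unfolding l_def using apos by simp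
    have sm: "(\<Sum>j\<in>UNIV. x $ j + \<gamma> * S) = S + n * (\<gamma> * S)"
      by (simp add: sum.distrib S_def cardn)
    have "x = (\<Sum>j\<in>UNIV. l j *\<^sub>R f j)"
    proof (subst vec_eq_iff, rule allI)
      fix i
      have "(\<Sum>j\<in>UNIV. l j *\<^sub>R f j) $ i = x $ i + \<gamma> * S - \<delta> * (S + n * (\<gamma> * S))"
        unfolding sumf comb al sm by simp
      also have "\<dots> = x $ i + S * (\<gamma> * y - \<delta>)" unfolding y_def by (simp add: algebra_simps)
      also have "\<dots> = x $ i" using gy by simp
      finally show "x $ i = (\<Sum>j\<in>UNIV. l j *\<^sub>R f j) $ i" by simp
    qed
    then show ?thesis by blast
  qed
  have indep: "l = (\<lambda>_. 0)" if h: "(\<Sum>j\<in>UNIV. l j *\<^sub>R f j) = 0" for l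
  proof -
    define M where "M = (\<Sum>j\<in>UNIV. \<alpha> * l j)"
    have mi: "\<alpha> * l i = \<delta> * M" for i
    proof -
      have "(\<Sum>j\<in>UNIV. l j *\<^sub>R f j) $ i = 0" using h by simp
      then show ?thesis unfolding sumf comb M_def by simp
    qed
    have "M = (\<Sum>j\<in>UNIV. \<alpha> * l j)" by (simp only: M_def)
    also have "\<dots> = (\<Sum>j::'n\<in>UNIV. \<delta> * M)" by (simp only: mi)
    also have "\<dots> = n * (\<delta> * M)" by (simp add: cardn)
    finally have "M = n * (\<delta> * M)" .
    then have "y * M = 0" unfolding y_def by (simp add: algebra_simps)
    then have "M = 0" using ypos by simp
    then have "l i = 0" for i using mi[of i] apos by simp
    then show ?thesis by auto
  qed
  have PB: "positive_basis P" unfolding P_eq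
    by (rule pb_lemma) (use span indep in auto)
  have innerB: "inner (col j B) u = u $ j - \<delta> * (\<Sum>i\<in>UNIV. u $ i)" for j u
  proof -
    have "inner (col j B) u = (\<Sum>i\<in>UNIV. ((if i = j then 1 else 0) - \<delta>) * u $ i)"
      by (simp add: inner_vec_def colB)
    also have "\<dots> = (\<Sum>i\<in>UNIV. (if i = j then u $ i else 0) - \<delta> * u $ i)"
      by (rule sum.cong) (auto simp: algebra_simps)
    also have "\<dots> = u $ j - \<delta> * (\<Sum>i\<in>UNIV. u $ i)"
      by (simp add: sum_subtractf sum_distrib_left)
    finally show ?thesis .
  qed
  have sumcol: "(\<Sum>i\<in>UNIV. col j B $ i) = 1 - n * \<delta>" for j
  proof -
    have "(\<Sum>i\<in>UNIV. col j B $ i) = (\<Sum>i\<in>UNIV. (if i = j then 1 else 0) - \<delta>)"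
      by (simp add: colB)
    also have "\<dots> = 1 - n * \<delta>" by (simp add: sum_subtractf cardn)
    finally show ?thesis .
  qed
  have normcol2: "(norm (col j B))^2 = D" for j
    unfolding power2_norm_eq_inner innerB sumcol D_def by (simp add: colB algebra_simps power2_eq_square)
  have normf: "norm (f j) = 1" for j
  proof -
    have "norm (col j B) = sqrt D" using normcol2[of j] by (metis norm_ge_zero real_sqrt_unique)
    then show ?thesis unfolding f_def \<alpha>_def D_def[symmetric] using Dpos apos by simp
  qed
  have normP: "norm d = 1" if "d \<in> P" for d using that normf unfolding P_eq by auto
  have innerf: "inner (f j) u = \<alpha> * (u $ j - \<delta> * (\<Sum>i\<in>UNIV. u $ i))" for j u
    unfolding f_def by (simp add: innerB)
  define g where "g u = Max ((\<lambda>d. inner d u / norm d) ` P)" for u :: "real^'n"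
  have finI: "finite ((\<lambda>d. inner d u / norm d) ` P)" for u unfolding P_def by simp
  have lower: "c \<le> g u" if nu: "norm u = 1" for u
  proof -
    define S where "S = (\<Sum>i\<in>UNIV. u $ i)"
    define v where "v i = u $ i - \<delta> * S" for i
    define M where "M = Max (range (\<lambda>i. \<bar>v i\<bar>))"
    have vM: "\<bar>v i\<bar> \<le> M" for i unfolding M_def by (rule Max_ge) auto
    have "M \<in> range (\<lambda>i. \<bar>v i\<bar>)" unfolding M_def by (rule Max_in) auto
    then obtain j0 where j0: "\<bar>v j0\<bar> = M" by auto
    have Mnn: "0 \<le> M" using vM[of j0] by simp
    have u1: "(\<Sum>i\<in>UNIV. (u $ i)^2) = 1"
      using nu by (simp add: norm_eq_1 inner_vec_def power2_eq_square)
    have sv: "(\<Sum>i\<in>UNIV. v i) = y * S"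
      unfolding v_def y_def S_def by (simp add: sum_subtractf cardn algebra_simps)
    define K where "K = 2 * \<delta> * y + n * \<delta>^2"
    have Knn: "K \<ge> 0" using dge ypos npos by (simp add: K_def)
    have expand: "(\<Sum>i\<in>UNIV. (u $ i)^2) = (\<Sum>i\<in>UNIV. (v i)^2) + S^2 * K"
    proof -
      have "(\<Sum>i\<in>UNIV. (u $ i)^2) = (\<Sum>i\<in>UNIV. (v i)^2 + 2 * \<delta> * S * v i + \<delta>^2 * S^2)"
        by (rule sum.cong) (simp_all add: v_def power2_eq_square algebra_simps)
      also have "\<dots> = (\<Sum>i\<in>UNIV. (v i)^2) + 2 * \<delta> * S * (\<Sum>i\<in>UNIV. v i) + n * (\<delta>^2 * S^2)"
        by (simp add: sum.distrib sum_distrib_left cardn)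
      also have "\<dots> = (\<Sum>i\<in>UNIV. (v i)^2) + S^2 * K" unfolding sv K_def
        by (simp add: power2_eq_square algebra_simps)
      finally show ?thesis .
    qed
    have b1: "(\<Sum>i\<in>UNIV. (v i)^2) \<le> n * M^2"
    proof -
      have "(\<Sum>i\<in>UNIV. (v i)^2) \<le> (\<Sum>i::'n\<in>UNIV. M^2)"
        by (rule sum_mono) (metis abs_ge_zero power2_abs power_mono vM)
      then show ?thesis by (simp add: cardn)
    qed
    have b2: "(y * S)^2 \<le> (n * M)^2"
    proof -
      have "\<bar>\<Sum>i\<in>UNIV. v i\<bar> \<le> (\<Sum>i\<in>UNIV. \<bar>v i\<bar>)" by (rule sum_abs)
      also have "\<dots> \<le> (\<Sum>i::'n\<in>UNIV. M)" by (rule sum_mono) (rule vM)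
      also have "\<dots> = n * M" by (simp add: cardn)
      finally have "\<bar>y * S\<bar> \<le> n * M" using sv by simp
      then show ?thesis by (metis abs_ge_zero power2_abs power_mono)
    qed
    have "y^2 = y^2 * ((\<Sum>i\<in>UNIV. (v i)^2) + S^2 * K)" using u1 expand by simp
    also have "\<dots> = y^2 * (\<Sum>i\<in>UNIV. (v i)^2) + (y * S)^2 * K"
      by (simp add: algebra_simps power_mult_distrib)
    also have "\<dots> \<le> y^2 * (n * M^2) + (n * M)^2 * K"
      using b1 b2 Knn by (intro add_mono mult_left_mono mult_right_mono) auto
    also have "\<dots> = n * M^2 * (y + n * \<delta>)^2" by (simp add: K_def power2_eq_square algebra_simps)
    also have "\<dots> = n * M^2" by (simp add: y_def)
    finally have "y^2 \<le> n * M^2" .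
    then have "sqrt (y^2) \<le> sqrt (n * M^2)" by (simp only: real_sqrt_le_iff)
    then have yM: "y \<le> sqrt n * M" using ypos Mnn npos by (simp add: real_sqrt_mult)
    have "c = \<alpha> * y / sqrt n" by (rule c_eq)
    also have "\<dots> \<le> \<alpha> * M"
    proof -
      have "\<alpha> * y \<le> \<alpha> * (sqrt n * M)" using yM apos by (simp add: mult_left_mono)
      then show ?thesis using npos by (simp add: pos_divide_le_eq mult_ac)
    qed
    also have "\<alpha> * M \<le> g u"
    proof -
    have "\<alpha> * M \<in> (\<lambda>d. inner d u / norm d) ` P"
    proof (cases "v j0 \<ge> 0")
      case True
      have "inner (f j0) u / norm (f j0) = \<alpha> * M"
        using True j0 unfolding normf innerf v_def S_def by simp
      moreover have "f j0 \<in> P" unfolding P_eq by simp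
      ultimately show ?thesis by (intro rev_image_eqI[of "f j0"]) simp_all
    next
      case False
      have "inner (- f j0) u / norm (- f j0) = \<alpha> * M"
        using False j0 unfolding norm_minus_cancel normf inner_minus_left innerf v_def S_def by (simp add: algebra_simps)
      moreover have "- f j0 \<in> P" unfolding P_eq by simp
      ultimately show ?thesis by (intro rev_image_eqI[of "- f j0"]) simp_all
    qed
    then show "\<alpha> * M \<le> g u" unfolding g_def by (rule Max_ge[OF finI])
    qed
    finally show ?thesis .
  qed
  define u0 :: "real^'n" where "u0 = (\<chi> i. 1 / sqrt n)"
  have su0: "(\<Sum>i\<in>UNIV. u0 $ i) = n / sqrt n" unfolding u0_def by (simp add: cardn)
  have nu0: "norm u0 = 1"
  proof -
    have "inner u0 u0 = n * (1 / sqrt n)^2" unfolding u0_def by (simp add: inner_vec_def cardn power2_eq_square)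
    also have "\<dots> = 1" using npos by (simp add: power_divide)
    finally show ?thesis by (simp add: norm_eq_1)
  qed
  have fu0: "inner (f j) u0 = c" for j
  proof -
    have "inner (f j) u0 = \<alpha> * (1 / sqrt n - \<delta> * (n / sqrt n))"
      unfolding innerf su0 by (simp add: u0_def)
    also have "\<dots> = \<alpha> * y / sqrt n" unfolding y_def by (simp add: diff_divide_distrib right_diff_distrib mult_ac)
    finally show ?thesis using c_eq by simp
  qed
  have gu0: "g u0 = c" unfolding g_def
  proof (rule Max_eqI[OF finI])
    fix z assume "z \<in> (\<lambda>d. inner d u0 / norm d) ` P"
    then obtain d where dP: "d \<in> P" and zd: "z = inner d u0 / norm d" by blast
    from dP consider j where "d = f j" | j where "d = - f j" unfolding P_eq by blast
    then show "z \<le> c"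
    proof cases
      case 1 then show ?thesis using zd fu0 normf by simp
    next
      case 2 then show ?thesis using zd fu0 normf c_pos by simp
    qed
  next
    have "inner (f undefined) u0 / norm (f undefined) = c" using fu0 normf by simp
    moreover have "f undefined \<in> P" unfolding P_eq by simp
    ultimately show "c \<in> (\<lambda>d. inner d u0 / norm d) ` P" by (intro rev_image_eqI[of "f undefined"]) simp_all
  qed
  have CM: "cosine_measure P = c"
    unfolding cosine_measure_def g_def[symmetric]
  proof (rule cInf_eq_minimum)
    show "c \<in> g ` {u. norm u = 1}" by (rule rev_image_eqI[of u0]) (use gu0 nu0 in auto)
  next
    fix x assume "x \<in> g ` {u. norm u = 1}"
    then show "c \<le> x" using lower by auto
  qed
  show ?thesis using dge dlt PB CM by simp
qed

end
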